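(* Let $n\geq 1$ be a natural number and let $T$ be a complete theory which is $n$-transitive and not $(n+1)$-transitive. Then $T$ is not $n$-ary.
   Context: For a natural number $m$, a complete theory $T$ is $m$-transitive if every complete type $q(x_1,\ldots,x_m)\in S(T)$ is forced (modulo $T$) by its restriction to the empty language, i.e. by the formulas of $q$ built only from equalities $x_i\approx x_j$. For $n\geq 1$, a formula of $T$ is $n$-ary if it is $T$-equivalent to a Boolean combination of $T$-formulas each having at most $n$ free variables. $T$ is unary ($1$-ary) if every $T$-formula is $T$-equivalent to a Boolean combination of $T$-formulas with one free variable and formulas $x\approx y$; for $n\geq 2$, $T$ is $n$-ary if every $T$-formula is $n$-ary. *)

theory Defs
  imports Main
begin

datatype 'f trm = Var nat | Fn 'f "'f trm list"

datatype ('f, 'r) fml =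
    Eq "'f trm" "'f trm"
  | Rel 'r "'f trm list"
  | Neg "('f, 'r) fml"
  | Conj "('f, 'r) fml" "('f, 'r) fml"
  | Ex nat "('f, 'r) fml"

fun fvt :: "'f trm \<Rightarrow> nat set" where
  "fvt (Var x) = {x}"
| "fvt (Fn f ts) = (\<Union>t\<in>set ts. fvt t)"

fun fv :: "('f, 'r) fml \<Rightarrow> nat set" where
  "fv (Eq s t) = fvt s \<union> fvt t"
| "fv (Rel r ts) = (\<Union>t\<in>set ts. fvt t)"
| "fv (Neg p) = fv p"
| "fv (Conj p q) = fv p \<union> fv q"
| "fv (Ex x p) = fv p - {x}"

fun empty_lang :: "('f, 'r) fml \<Rightarrow> bool" where
  "empty_lang (Eq (Var i) (Var j)) = True"
| "empty_lang (Eq _ _) = False"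
| "empty_lang (Rel _ _) = False"
| "empty_lang (Neg p) = empty_lang p"
| "empty_lang (Conj p q) = (empty_lang p \<and> empty_lang q)"
| "empty_lang (Ex x p) = empty_lang p"

record ('a, 'f, 'r) struc =
  dom :: "'a set"
  fns :: "'f \<Rightarrow> 'a list \<Rightarrow> 'a"
  rls :: "'r \<Rightarrow> 'a list \<Rightarrow> bool"

definition is_struc :: "('a, 'f, 'r) struc \<Rightarrow> bool" where
  "is_struc M \<longleftrightarrow> dom M \<noteq> {} \<and>
     (\<forall>f as. set as \<subseteq> dom M \<longrightarrow> fns M f as \<in> dom M)"

fun evalt :: "('a, 'f, 'r) struc \<Rightarrow> (nat \<Rightarrow> 'a) \<Rightarrow> 'f trm \<Rightarrow> 'a" where
  "evalt M e (Var x) = e x"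
| "evalt M e (Fn f ts) = fns M f (map (evalt M e) ts)"

fun sat :: "('a, 'f, 'r) struc \<Rightarrow> (nat \<Rightarrow> 'a) \<Rightarrow> ('f, 'r) fml \<Rightarrow> bool" where
  "sat M e (Eq s t) = (evalt M e s = evalt M e t)"
| "sat M e (Rel r ts) = rls M r (map (evalt M e) ts)"
| "sat M e (Neg p) = (\<not> sat M e p)"
| "sat M e (Conj p q) = (sat M e p \<and> sat M e q)"
| "sat M e (Ex x p) = (\<exists>a\<in>dom M. sat M (e(x := a)) p)"

definition assigns :: "('a, 'f, 'r) struc \<Rightarrow> (nat \<Rightarrow> 'a) set" where
  "assigns M = {e. range e \<subseteq> dom M}"

text \<open>Throughout, the complete theory T is represented as Th(M) for a structure M.
  Since T is complete, T-consequence of a sentence is truth in M, and by compactness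
  T \<union> \<Sigma>(x) \<turnstile> \<phi>(x) iff for some finite \<Sigma>0 \<subseteq> \<Sigma>, T \<turnstile> \<forall>x (\<And>\<Sigma>0 \<rightarrow> \<phi>), i.e. M satisfies this.\<close>

definition T_equiv :: "('a, 'f, 'r) struc \<Rightarrow> ('f, 'r) fml \<Rightarrow> ('f, 'r) fml \<Rightarrow> bool" where
  "T_equiv M p q \<longleftrightarrow> (\<forall>e\<in>assigns M. sat M e p = sat M e q)"

definition T_entails :: "('a, 'f, 'r) struc \<Rightarrow> ('f, 'r) fml set \<Rightarrow> ('f, 'r) fml \<Rightarrow> bool" where
  "T_entails M \<Sigma> p \<longleftrightarrow> (\<exists>\<Sigma>0. finite \<Sigma>0 \<and> \<Sigma>0 \<subseteq> \<Sigma> \<and>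
      (\<forall>e\<in>assigns M. (\<forall>q\<in>\<Sigma>0. sat M e q) \<longrightarrow> sat M e p))"

text \<open>Consistency of a set of formulas with T (T complete, compactness): finitely satisfiable in M.\<close>
definition T_consistent :: "('a, 'f, 'r) struc \<Rightarrow> ('f, 'r) fml set \<Rightarrow> bool" where
  "T_consistent M \<Sigma> \<longleftrightarrow> (\<forall>\<Sigma>0. finite \<Sigma>0 \<and> \<Sigma>0 \<subseteq> \<Sigma> \<longrightarrow>
      (\<exists>e\<in>assigns M. \<forall>q\<in>\<Sigma>0. sat M e q))"

text \<open>Complete types q(x_1,...,x_m) in S(T); the variables x_1..x_m are Var 0 .. Var (m-1).\<close>
definition complete_type :: "('a, 'f, 'r) struc \<Rightarrow> nat \<Rightarrow> ('f, 'r) fml set \<Rightarrow> bool" where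
  "complete_type M m q \<longleftrightarrow>
     (\<forall>p\<in>q. fv p \<subseteq> {..<m}) \<and> T_consistent M q \<and>
     (\<forall>p. fv p \<subseteq> {..<m} \<longrightarrow> p \<in> q \<or> Neg p \<in> q)"

definition transitive :: "('a, 'f, 'r) struc \<Rightarrow> nat \<Rightarrow> bool" where
  "transitive M m \<longleftrightarrow> (\<forall>q. complete_type M m q \<longrightarrow>
     (\<forall>p\<in>q. T_entails M {r\<in>q. empty_lang r} p))"

inductive_set bool_comb :: "('f, 'r) fml set \<Rightarrow> ('f, 'r) fml set" for B where
  base: "p \<in> B \<Longrightarrow> p \<in> bool_comb B"
| neg: "p \<in> bool_comb B \<Longrightarrow> Neg p \<in> bool_comb B"
| conj: "p \<in> bool_comb B \<Longrightarrow> q \<in> bool_comb B \<Longrightarrow> Conj p q \<in> bool_comb B"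

definition nary_fml :: "('a, 'f, 'r) struc \<Rightarrow> nat \<Rightarrow> ('f, 'r) fml \<Rightarrow> bool" where
  "nary_fml M n p \<longleftrightarrow> (\<exists>q\<in>bool_comb {r. card (fv r) \<le> n}. T_equiv M p q)"

definition nary :: "('a, 'f, 'r) struc \<Rightarrow> nat \<Rightarrow> bool" where
  "nary M n \<longleftrightarrow>
     (if n = 1 then
        (\<forall>p. \<exists>q\<in>bool_comb ({r. card (fv r) \<le> 1} \<union> {Eq (Var x) (Var y) | x y. True}).
              T_equiv M p q)
      else (\<forall>p. nary_fml M n p))"

end

theory Submission
  imports Defs
begin

definition pat :: "(nat \<Rightarrow> 'a) \<Rightarrow> (nat \<Rightarrow> 'a) \<Rightarrow> nat set \<Rightarrow> bool" where
  "pat e e' F \<longleftrightarrow> (\<forall>i\<in>F. \<forall>j\<in>F. (e i = e j) = (e' i = e' j))"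

lemma pat_sym: "pat e e' F \<Longrightarrow> pat e' e F"
  unfolding pat_def by blast

lemma pat_mono: "pat e e' F \<Longrightarrow> G \<subseteq> F \<Longrightarrow> pat e e' G"
  unfolding pat_def by blast

fun rnt :: "(nat \<Rightarrow> nat) \<Rightarrow> 'f trm \<Rightarrow> 'f trm" where
  "rnt \<rho> (Var x) = Var (\<rho> x)"
| "rnt \<rho> (Fn f ts) = Fn f (map (rnt \<rho>) ts)"

fun rn :: "(nat \<Rightarrow> nat) \<Rightarrow> ('f, 'r) fml \<Rightarrow> ('f, 'r) fml" where
  "rn \<rho> (Eq s t) = Eq (rnt \<rho> s) (rnt \<rho> t)"
| "rn \<rho> (Rel r ts) = Rel r (map (rnt \<rho>) ts)"
| "rn \<rho> (Neg p) = Neg (rn \<rho> p)"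
| "rn \<rho> (Conj p q) = Conj (rn \<rho> p) (rn \<rho> q)"
| "rn \<rho> (Ex x p) = Ex (\<rho> x) (rn \<rho> p)"

lemma evalt_rnt: "evalt M e (rnt \<rho> t) = evalt M (e \<circ> \<rho>) t"
  by (induction t) (auto cong: map_cong)

lemma fvt_rnt: "fvt (rnt \<rho> t) = \<rho> ` fvt t"
  by (induction t) auto

lemma sat_rn: "inj \<rho> \<Longrightarrow> sat M e (rn \<rho> p) = sat M (e \<circ> \<rho>) p"
proof (induction p arbitrary: e)
  case (Ex x p)
  have *: "\<And>a. (e(\<rho> x := a)) \<circ> \<rho> = (e \<circ> \<rho>)(x := a)"
    using Ex.prems by (auto simp: fun_eq_iff inj_eq)
  have "sat M e (rn \<rho> (Ex x p)) = (\<exists>a\<in>dom M. sat M (e(\<rho> x := a)) (rn \<rho> p))" by simp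
  also have "\<dots> = (\<exists>a\<in>dom M. sat M ((e(\<rho> x := a)) \<circ> \<rho>) p)" using Ex.IH[OF Ex.prems] by blast
  also have "\<dots> = (\<exists>a\<in>dom M. sat M ((e \<circ> \<rho>)(x := a)) p)" using * by metis
  also have "\<dots> = sat M (e \<circ> \<rho>) (Ex x p)" by simp
  finally show ?case .
qed (auto simp: evalt_rnt comp_def)

lemma fv_rn: "inj \<rho> \<Longrightarrow> fv (rn \<rho> p) = \<rho> ` fv p"
proof (induction p)
  case (Ex x p)
  then show ?case by (simp add: image_set_diff)
qed (auto simp: fvt_rnt)

lemma evalt_agree: "(\<forall>x\<in>fvt t. e x = e' x) \<Longrightarrow> evalt M e t = evalt M e' t"
  by (induction t) (auto cong: map_cong)

lemma sat_agree: "(\<forall>x\<in>fv p. e x = e' x) \<Longrightarrow> sat M e p = sat M e' p"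
proof (induction p arbitrary: e e')
  case (Eq s t) then show ?case using evalt_agree[of s e e' M] evalt_agree[of t e e' M] by simp
next
  case (Rel r ts)
  then have "map (evalt M e) ts = map (evalt M e') ts"
    by (intro map_cong refl evalt_agree) auto
  then show ?case by (metis sat.simps(2))
next
  case (Ex x p)
  have "\<And>a. sat M (e(x := a)) p = sat M (e'(x := a)) p"
    using Ex.prems by (intro Ex.IH) auto
  then show ?case by simp
next
  case (Conj p q)
  then show ?case by (metis Un_iff fv.simps(4) sat.simps(4))
qed auto

lemma finite_fvt: "finite (fvt t)"
  by (induction t) auto

lemma finite_fv: "finite (fv p)"
  by (induction p) (auto simp: finite_fvt)

lemma card_pat_le:
  assumes "pat e e' G" "finite G"
  shows "card (e' ` G) \<le> card (e ` G)"
proof -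
  define \<theta> where "\<theta> v = e' (SOME i. i \<in> G \<and> e i = v)" for v
  have "e' ` G \<subseteq> \<theta> ` (e ` G)"
  proof
    fix y assume "y \<in> e' ` G"
    then obtain i where i: "i \<in> G" "y = e' i" by blast
    have "\<exists>k. k \<in> G \<and> e k = e i" using i by blast
    then have "(SOME k. k \<in> G \<and> e k = e i) \<in> G \<and> e (SOME k. k \<in> G \<and> e k = e i) = e i"
      by (rule someI_ex)
    then have "\<theta> (e i) = y" using assms(1) i unfolding \<theta>_def pat_def by blast
    then show "y \<in> \<theta> ` (e ` G)" using i by blast
  qed
  then have "card (e' ` G) \<le> card (\<theta> ` (e ` G))"
    using assms(2) by (intro card_mono) auto
  also have "\<dots> \<le> card (e ` G)" using assms(2) by (intro card_image_le) auto
  finally show ?thesis .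
qed

lemma card_pat: "pat e e' G \<Longrightarrow> finite G \<Longrightarrow> card (e' ` G) = card (e ` G)"
  using card_pat_le[of e e' G] card_pat_le[of e' e G] pat_sym by fastforce

lemma ex_step:
  assumes "finite F" "e \<in> assigns M" "e' \<in> assigns M" "pat e e' (F - {x})" "a \<in> dom M"
  shows "\<exists>a'\<in>dom M. pat (e(x:=a)) (e'(x:=a')) F"
proof (cases "\<exists>j\<in>F - {x}. e j = a")
  case True
  then obtain j where j: "j \<in> F - {x}" "e j = a" by blast
  have "e' j \<in> dom M" using assms(3) unfolding assigns_def by auto
  moreover have "pat (e(x:=a)) (e'(x:=e' j)) F"
    using assms(4) j unfolding pat_def by auto
  ultimately show ?thesis by blast
next
  case False
  define G where "G = F - {x}"
  have fG: "finite G" using assms(1) G_def by auto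
  have eG: "e ` G \<subseteq> dom M" "e' ` G \<subseteq> dom M" using assms(2,3) unfolding assigns_def by auto
  have aG: "a \<notin> e ` G" using False G_def by auto
  have "\<exists>a'. a' \<in> dom M - e' ` G"
  proof (cases "finite (dom M)")
    case True
    have "e ` G \<subset> dom M" using eG aG assms(5) by blast
    then have "card (e ` G) < card (dom M)" using True by (intro psubset_card_mono) auto
    then have "card (e' ` G) < card (dom M)" using card_pat[OF assms(4)[folded G_def] fG] by simp
    then have "\<not> dom M \<subseteq> e' ` G" using fG card_mono[of "e' ` G" "dom M"] by auto
    then show ?thesis by blast
  next
    case False
    then have "infinite (dom M - e' ` G)" using fG by (intro Diff_infinite_finite) auto
    then show ?thesis by (metis ex_in_conv finite.emptyI)
  qed
  then obtain a' where a': "a' \<in> dom M" "a' \<notin> e' ` G" by blast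
  have "pat (e(x:=a)) (e'(x:=a')) F"
    using assms(4) aG a' unfolding pat_def G_def by auto
  then show ?thesis using a' by blast
qed

lemma assigns_upd: "e \<in> assigns M \<Longrightarrow> a \<in> dom M \<Longrightarrow> e(x := a) \<in> assigns M"
  unfolding assigns_def by auto

lemma empty_inv:
  "empty_lang p \<Longrightarrow> e \<in> assigns M \<Longrightarrow> e' \<in> assigns M \<Longrightarrow> pat e e' (fv p) \<Longrightarrow>
   sat M e p = sat M e' p"
proof (induction p arbitrary: e e')
  case (Eq s t)
  then obtain i j where "s = Var i" "t = Var j"
    by (cases s; cases t) auto
  then show ?case using Eq.prems unfolding pat_def by auto
next
  case (Conj p q)
  then show ?case using pat_mono[of e e' "fv (Conj p q)"] by auto
next
  case (Ex x p)
  have one: "sat M e2 (Ex x p)" if "sat M e1 (Ex x p)" "e1 \<in> assigns M" "e2 \<in> assigns M"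
    "pat e1 e2 (fv p - {x})" for e1 e2
  proof -
    note th = that
    from that(1) obtain a where a: "a \<in> dom M" "sat M (e1(x:=a)) p" by auto
    obtain a' where a': "a' \<in> dom M" "pat (e1(x:=a)) (e2(x:=a')) (fv p)"
      using ex_step[OF finite_fv th(2,3,4) a(1)] by blast
    have "sat M (e1(x:=a)) p = sat M (e2(x:=a')) p"
      using Ex.IH[OF _ assigns_upd[OF th(2) a(1)] assigns_upd[OF th(3) a'(1)] a'(2)] Ex.prems(1)
      by (simp add: fun_upd_def)
    then have "sat M (e2(x:=a')) p" using a by simp
    then show ?thesis using a' by auto
  qed
  have "pat e e' (fv p - {x})" "pat e' e (fv p - {x})" using Ex.prems pat_sym by auto
  then show ?case using one[of e e'] one[of e' e] Ex.prems by blast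
qed auto

definition D :: "('a, 'f, 'r) struc \<Rightarrow> ('f, 'r) fml set" where
  "D M = {p. \<forall>e\<in>assigns M. \<forall>e'\<in>assigns M. pat e e' UNIV \<longrightarrow> sat M e p = sat M e' p}"

lemma trans_inv:
  assumes "transitive M n" "fv p \<subseteq> {..<n}" "e \<in> assigns M" "e' \<in> assigns M"
    "pat e e' UNIV" "sat M e p"
  shows "sat M e' p"
proof -
  define q where "q = {p. fv p \<subseteq> {..<n} \<and> sat M e p}"
  have ct: "complete_type M n q"
    unfolding complete_type_def T_consistent_def q_def using assms(3) by auto
  have "p \<in> q" using assms q_def by auto
  then have "T_entails M {r\<in>q. empty_lang r} p"
    using assms(1) ct unfolding transitive_def by blast
  then obtain S0 where S0: "finite S0" "S0 \<subseteq> {r\<in>q. empty_lang r}"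
    "\<forall>e\<in>assigns M. (\<forall>r\<in>S0. sat M e r) \<longrightarrow> sat M e p"
    unfolding T_entails_def by blast
  have "\<forall>r\<in>S0. sat M e' r"
  proof
    fix r assume "r \<in> S0"
    then have r: "r \<in> q" "empty_lang r" using S0 by auto
    then have "sat M e r" using q_def by auto
    moreover have "pat e e' (fv r)" using pat_mono[OF assms(5)] by blast
    ultimately show "sat M e' r" using empty_inv[OF r(2) assms(3,4)] by blast
  qed
  then show ?thesis using S0(3) assms(4) by blast
qed

lemma small_inv:
  assumes "transitive M n" "card (fv p) \<le> n"
  shows "p \<in> D M"
proof -
  define S where "S = fv p"
  have fS: "finite S" using S_def finite_fv by auto
  obtain g where g: "bij_betw g S {0..<card S}" using ex_bij_betw_finite_nat[OF fS] by blast
  define \<rho> where "\<rho> x = (if x \<in> S then g x else n + x)" for x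
  have gS: "g x < n" if "x \<in> S" for x
  proof -
    have "g x \<in> {0..<card S}" using g that unfolding bij_betw_def by blast
    then show ?thesis using assms(2) S_def by auto
  qed
  have injg: "inj_on g S" using g bij_betw_def by blast
  have inj: "inj \<rho>"
  proof (rule injI)
    fix x y assume "\<rho> x = \<rho> y"
    then show "x = y"
    proof (cases "x \<in> S"; cases "y \<in> S")
      assume "\<rho> x = \<rho> y" "x \<in> S" "y \<in> S"
      then show ?thesis using injg unfolding \<rho>_def by (simp add: inj_on_eq_iff)
    next
      assume "\<rho> x = \<rho> y" "x \<in> S" "y \<notin> S"
      then show ?thesis using gS[of x] unfolding \<rho>_def by simp
    next
      assume "\<rho> x = \<rho> y" "x \<notin> S" "y \<in> S"
      then show ?thesis using gS[of y] unfolding \<rho>_def by simp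
    next
      assume "\<rho> x = \<rho> y" "x \<notin> S" "y \<notin> S"
      then show ?thesis unfolding \<rho>_def by simp
    qed
  qed
  define \<psi> where "\<psi> = rn \<rho> p"
  have fvpsi: "fv \<psi> \<subseteq> {..<n}"
  proof
    fix y assume "y \<in> fv \<psi>"
    then obtain x where "x \<in> S" "y = \<rho> x" using fv_rn[OF inj] unfolding \<psi>_def S_def by auto
    then show "y \<in> {..<n}" using gS unfolding \<rho>_def by auto
  qed
  show ?thesis unfolding D_def
  proof (intro CollectI ballI impI)
    fix e1 e2 assume e: "e1 \<in> assigns M" "e2 \<in> assigns M" "pat e1 e2 UNIV"
    define f1 where "f1 = e1 \<circ> inv \<rho>"
    define f2 where "f2 = e2 \<circ> inv \<rho>"
    have f: "f1 \<in> assigns M" "f2 \<in> assigns M" using e unfolding f1_def f2_def assigns_def by auto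
    have pf: "pat f1 f2 UNIV" using e(3) unfolding pat_def f1_def f2_def by auto
    have c1: "f1 \<circ> \<rho> = e1" "f2 \<circ> \<rho> = e2" using inj unfolding f1_def f2_def by (auto simp: fun_eq_iff)
    have "sat M e1 p = sat M f1 \<psi>" unfolding \<psi>_def sat_rn[OF inj] c1 ..
    also have "\<dots> = sat M f2 \<psi>"
      using trans_inv[OF assms(1) fvpsi f pf] trans_inv[OF assms(1) fvpsi f(2,1) pat_sym[OF pf]] by blast
    also have "\<dots> = sat M e2 p" unfolding \<psi>_def sat_rn[OF inj] c1 ..
    finally show "sat M e1 p = sat M e2 p" .
  qed
qed

lemma bool_comb_D: "q \<in> bool_comb B \<Longrightarrow> B \<subseteq> D M \<Longrightarrow> q \<in> D M"
  by (induction rule: bool_comb.induct) (auto simp: D_def)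

lemma all_D:
  assumes "transitive M n" "nary M n"
  shows "p \<in> D M"
proof -
  have eqD: "Eq (Var x) (Var y) \<in> D M" for x y unfolding D_def pat_def by auto
  obtain q where q: "T_equiv M p q" "q \<in> D M"
  proof (cases "n = 1")
    case True
    then obtain q where "q \<in> bool_comb ({r. card (fv r) \<le> 1} \<union> {Eq (Var x) (Var y) | x y. True})"
       "T_equiv M p q" using assms(2) unfolding nary_def by auto
    moreover have "{r. card (fv r) \<le> 1} \<union> {Eq (Var x) (Var y) | x y. True} \<subseteq> D M"
      using small_inv[OF assms(1)] True eqD by auto
    ultimately show ?thesis using that bool_comb_D by blast
  next
    case False
    then obtain q where "q \<in> bool_comb {r. card (fv r) \<le> n}"
       "T_equiv M p q" using assms(2) unfolding nary_def nary_fml_def by auto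
    moreover have "{r. card (fv r) \<le> n} \<subseteq> D M"
      using small_inv[OF assms(1)] by auto
    ultimately show ?thesis using that bool_comb_D by blast
  qed
  then show ?thesis unfolding D_def T_equiv_def by auto
qed

theorem proposition1p6:
  fixes M :: "('a, 'f, 'r) struc" and n :: nat
  assumes "is_struc M"
    and "n \<ge> 1"
    and "transitive M n"
    and "\<not> transitive M (n + 1)"
  shows "\<not> nary M n"
proof
  assume na: "nary M n"
  have allD: "\<And>p. p \<in> D M" using all_D[OF assms(3) na] .
  have "transitive M (n + 1)"
    unfolding transitive_def
  proof (intro allI impI ballI)
    fix q p assume ct: "complete_type M (n + 1) q" and pq: "p \<in> q"
    define S0 where "S0 = {r. \<exists>i<n+1. \<exists>j<n+1. r \<in> q \<and>
       (r = Eq (Var i) (Var j) \<or> r = Neg (Eq (Var i) (Var j)))}"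
    define F where "F = (\<lambda>(i::nat,j::nat,b::bool). if b then Eq (Var i) (Var j) else (Neg (Eq (Var i) (Var j)) :: ('f,'r) fml))"
    have "S0 \<subseteq> F ` ({..<n+1} \<times> {..<n+1} \<times> (UNIV :: bool set))"
    proof
      fix r assume "r \<in> S0"
      then obtain i j where ij: "i<n+1" "j<n+1" "r = Eq (Var i) (Var j) \<or> r = Neg (Eq (Var i) (Var j))"
        unfolding S0_def by blast
      from ij(3) show "r \<in> F ` ({..<n+1} \<times> {..<n+1} \<times> (UNIV :: bool set))"
      proof
        assume "r = Eq (Var i) (Var j)"
        then have "r = F (i,j,True)" unfolding F_def by simp
        then show ?thesis using ij(1,2) by blast
      next
        assume "r = Neg (Eq (Var i) (Var j))"
        then have "r = F (i,j,False)" unfolding F_def by simp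
        then show ?thesis using ij(1,2) by blast
      qed
    qed
    moreover have "finite (F ` ({..<n+1} \<times> {..<n+1} \<times> (UNIV :: bool set)))"
      by (intro finite_imageI finite_cartesian_product) auto
    ultimately have fS0: "finite S0" by (rule finite_subset)
    have sub: "S0 \<subseteq> {r\<in>q. empty_lang r}" unfolding S0_def by auto
    have fvp: "fv p \<subseteq> {..<n+1}" using ct pq unfolding complete_type_def by auto
    have "\<forall>e\<in>assigns M. (\<forall>r\<in>S0. sat M e r) \<longrightarrow> sat M e p"
    proof (intro ballI impI)
      fix e assume e: "e \<in> assigns M" "\<forall>r\<in>S0. sat M e r"
      have "finite (insert p S0)" "insert p S0 \<subseteq> q" using fS0 sub pq by auto
      then have "finite (insert p S0) \<and> insert p S0 \<subseteq> q" by blast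
      moreover have "T_consistent M q" using ct unfolding complete_type_def by blast
      ultimately obtain e0 where e0: "e0 \<in> assigns M" "\<forall>r\<in>insert p S0. sat M e0 r"
        unfolding T_consistent_def by (elim allE[of _ "insert p S0"] impE bexE) auto
      have pt: "(e0 i = e0 j) = (e i = e j)" if "i < n+1" "j < n+1" for i j
      proof -
        have "fv (Eq (Var i) (Var j)) \<subseteq> {..<n+1}" using that by auto
        moreover have "\<forall>p. fv p \<subseteq> {..<n+1} \<longrightarrow> p \<in> q \<or> Neg p \<in> q"
          using ct unfolding complete_type_def by blast
        ultimately have "Eq (Var i) (Var j) \<in> q \<or> Neg (Eq (Var i) (Var j)) \<in> q"
          by blast
        then have "Eq (Var i) (Var j) \<in> S0 \<or> Neg (Eq (Var i) (Var j)) \<in> S0"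
          unfolding S0_def using that by blast
        then show ?thesis
        proof
          assume "Eq (Var i) (Var j) \<in> S0"
          then have "sat M e (Eq (Var i) (Var j))" "sat M e0 (Eq (Var i) (Var j))" using e(2) e0(2) by blast+
          then show ?thesis by simp
        next
          assume "Neg (Eq (Var i) (Var j)) \<in> S0"
          then have "sat M e (Neg (Eq (Var i) (Var j)))" "sat M e0 (Neg (Eq (Var i) (Var j)))" using e(2) e0(2) by blast+
          then show ?thesis by simp
        qed
      qed
      define e1 where "e1 x = (if x < n+1 then e0 x else e0 0)" for x
      define e2 where "e2 x = (if x < n+1 then e x else e 0)" for x
      have a12: "e1 \<in> assigns M" "e2 \<in> assigns M"
        using e(1) e0(1) unfolding assigns_def e1_def e2_def by auto
      have "(e1 i = e1 j) = (e2 i = e2 j)" for i j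
        unfolding e1_def e2_def by (cases "i < n+1"; cases "j < n+1") (simp_all add: pt)
      then have p12: "pat e1 e2 UNIV" unfolding pat_def by blast
      have "sat M e0 p = sat M e1 p" using fvp by (intro sat_agree) (auto simp: e1_def)
      also have "\<dots> = sat M e2 p" using allD[of p] a12 p12 unfolding D_def by blast
      also have "\<dots> = sat M e p" using fvp by (intro sat_agree) (auto simp: e2_def)
      finally show "sat M e p" using e0(2) by simp
    qed
    then show "T_entails M {r\<in>q. empty_lang r} p"
      unfolding T_entails_def using fS0 sub by blast
  qed
  then show False using assms(4) by blast
qed

end
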